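(* Let $A$ be a clustering of $\{1,\dots,n\}$ with $1<k_A<n$, let $s$ be a cluster-size specification of $n$ elements, and let $B\sim\mathcal C(s)$. Then $$\mathbf E[\mathrm{CD}(A,B)]-\tfrac12=-\frac1\pi\sum_{k=1}^\infty\frac{(2k)!}{2^{2k}(k!)^2}\,\frac{\mathbf E[\mathrm{CC}(A,B)^{2k+1}]}{2k+1}.$$
   Context: A clustering of $\{1,\dots,n\}$ is a partition $A=\{A_1,\dots,A_{k_A}\}$ into nonempty clusters. Let $N=\binom n2$. For a clustering $A$, let $\vec A\in\{0,1\}^N$ be indexed by unordered pairs of distinct elements, with entry $1$ iff the pair lies in one cluster of $A$; let $m_A$ be the number of such pairs and $\mathbf 1$ the all-ones vector. Define $\vec u(A)=\frac1{\sqrt N}\mathbf 1$ if $k_A=1$, $\vec u(A)=(\vec A-\frac{m_A}N\mathbf 1)/\|\vec A-\frac{m_A}N\mathbf 1\|$ if $1<k_A<n$, $\vec u(A)=-\frac1{\sqrt N}\mathbf 1$ if $k_A=n$. Then $\mathrm{CC}(A,B)=\langle\vec u(A),\vec u(B)\rangle$ (the Pearson correlation of $\vec A,\vec B$ when both clusterings are nontrivial) and $\mathrm{CD}(A,B)=\frac1\pi\arccos\mathrm{CC}(A,B)$. For a multiset $s$ of positive integers summing to $n$, $\mathcal C(s)$ is the uniform distribution over clusterings with cluster sizes $s$. *)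

theory Defs
  imports "HOL-Probability.Probability" "HOL-Library.Disjoint_Sets" "HOL-Library.Multiset"
begin

definition clustering :: "nat \<Rightarrow> nat set set \<Rightarrow> bool" where
  "clustering n A \<longleftrightarrow> partition_on {1..n} A"

definition upairs :: "nat \<Rightarrow> nat set set" where
  "upairs n = {p. \<exists>i j. i \<in> {1..n} \<and> j \<in> {1..n} \<and> i \<noteq> j \<and> p = {i, j}}"

definition NN :: "nat \<Rightarrow> real" where
  "NN n = real (card (upairs n))"

definition cvec :: "nat set set \<Rightarrow> nat set \<Rightarrow> real" where
  "cvec A p = (if \<exists>C\<in>A. p \<subseteq> C then 1 else 0)"

definition mA :: "nat \<Rightarrow> nat set set \<Rightarrow> real" where
  "mA n A = (\<Sum>p\<in>upairs n. cvec A p)"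

definition uvec :: "nat \<Rightarrow> nat set set \<Rightarrow> nat set \<Rightarrow> real" where
  "uvec n A p =
     (if card A = 1 then 1 / sqrt (NN n)
      else if card A = n then - 1 / sqrt (NN n)
      else (cvec A p - mA n A / NN n) /
           sqrt (\<Sum>q\<in>upairs n. (cvec A q - mA n A / NN n)^2))"

definition CC :: "nat \<Rightarrow> nat set set \<Rightarrow> nat set set \<Rightarrow> real" where
  "CC n A B = (\<Sum>p\<in>upairs n. uvec n A p * uvec n B p)"

definition CD :: "nat \<Rightarrow> nat set set \<Rightarrow> nat set set \<Rightarrow> real" where
  "CD n A B = arccos (CC n A B) / pi"

definition clusterings_sizes :: "nat \<Rightarrow> nat multiset \<Rightarrow> nat set set set" where
  "clusterings_sizes n s = {B. clustering n B \<and> image_mset card (mset_set B) = s}"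

definition Cdist :: "nat \<Rightarrow> nat multiset \<Rightarrow> nat set set pmf" where
  "Cdist n s = pmf_of_set (clusterings_sizes n s)"

end

theory Submission
  imports Defs
begin

definition ac :: "nat \<Rightarrow> real" where "ac k = fact (2*k) / (2^(2*k) * (fact k)^2)"

lemma gchoose_Suc_rec: "(a::real) gchoose (Suc k) = (a gchoose k) * (a - real k) / (real k + 1)"
  by (simp add: gbinomial_prod_rev atLeastLessThanSuc_atLeastAtMost[symmetric] prod.atLeast0_lessThan_Suc algebra_simps)

lemma aux: "y \<noteq> 0 \<Longrightarrow> Q \<noteq> 0 \<Longrightarrow> F*(y*z)/(Q*y*y) = F/Q*z/y" for y z Q F :: real
  by (simp add: field_simps)
lemma ac_Suc: "ac (Suc k) = ac k * (2*real k+1) / (2*real k+2)"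
proof -
  have f1: "fact (2 * Suc k) = (fact (2*k)::real) * ((2*real k+2)*(2*real k+1))"
    by (simp add: algebra_simps)
  have f2: "(fact (Suc k)::real)^2 = (real k + 1)^2 * (fact k)^2"
    by (simp add: algebra_simps power2_eq_square)
  have f3: "(2::real)^(2*Suc k) = 4 * 2^(2*k)" by simp
  have "ac (Suc k) = fact (2*k) * ((2*real k+2)*(2*real k+1)) / (4*2^(2*k)*((real k+1)^2*(fact k)^2))"
    unfolding ac_def f1 f2 f3 by (simp only: mult_ac)
  also have "\<dots> = fact (2*k) / (2^(2*k)*(fact k)^2) * (2*real k+1) / (2*real k+2)"
  proof -
    have e: "4*2^(2*k)*((real k+1)^2*(fact k)^2) = (2^(2*k)*(fact k)^2)*(2*real k+2)*(2*real k+2)" by (simp add: power2_eq_square algebra_simps)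
    show ?thesis unfolding e by (rule aux) auto
  qed
  finally show ?thesis unfolding ac_def .
qed

lemma ac_gchoose: "ac k = (-1)^k * ((-1/2) gchoose k)"
proof (induction k)
  case 0 then show ?case by (simp add: ac_def)
next
  case (Suc k)
  show ?case unfolding ac_Suc Suc gchoose_Suc_rec by (simp add: field_simps)
qed

lemma ac_nonneg: "0 \<le> ac k" by (simp add: ac_def)

lemma ac_sq: "(ac k)^2 \<le> 1 / (2*real k+1)"
proof (induction k)
  case 0 then show ?case by (simp add: ac_def)
next
  case (Suc k)
  have "(ac (Suc k))^2 = (ac k)^2 * ((2*real k+1) / (2*real k+2))^2"
    by (simp add: ac_Suc power_mult_distrib power_divide)
  also have "\<dots> \<le> 1 / (2*real k+1) * ((2*real k+1) / (2*real k+2))^2"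
    by (rule mult_right_mono[OF Suc]) simp
  also have "\<dots> = (2*real k+1) / (2*real k+2)^2" by (simp add: power2_eq_square)
  also have "\<dots> \<le> 1 / (2 * real (Suc k) + 1)"
  proof -
    have "(2*real k+1) * (2 * real (Suc k) + 1) \<le> (2*real k+2)^2" by (simp add: power2_eq_square algebra_simps)
    then show ?thesis by (simp add: divide_simps)
  qed
  finally show ?case .
qed

lemma ac_le_sqrt: "ac k \<le> 1 / sqrt (real k + 1)"
proof -
  have "ac k = sqrt ((ac k)^2)" using ac_nonneg by simp
  also have "\<dots> \<le> sqrt (1 / (2*real k+1))" using ac_sq real_sqrt_le_mono by blast
  also have "\<dots> \<le> sqrt (1 / (real k + 1))" by (intro real_sqrt_le_mono) (simp add: field_simps)
  finally show ?thesis by (simp add: real_sqrt_divide)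
qed

lemma powr_32: "(y::real) > 0 \<Longrightarrow> y powr (-3/2) = 1 / (y * sqrt y)"
proof -
  assume y: "y > 0"
  have a: "y powr (1 + 1/2) = y powr 1 * y powr (1/2)" by (rule powr_add)
  have b: "y powr 1 = y" using y by simp
  have c: "y powr (1/2) = sqrt y" using y by (simp add: powr_half_sqrt)
  have d: "(-3/2::real) = - (1 + 1/2)" by simp
  have "y powr (-3/2) = inverse (y powr (1 + 1/2))" unfolding d by (rule powr_minus)
  also have "\<dots> = 1 / (y * sqrt y)" unfolding a b c by (simp add: divide_inverse)
  finally show ?thesis .
qed

lemma ac_bound: "ac k / (2*real k+1) \<le> real (Suc k) powr (-3/2)"
proof -
  have "ac k / (2*real k+1) \<le> (1 / sqrt (real k + 1)) / (real k + 1)"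
    using ac_le_sqrt[of k] ac_nonneg[of k]
    by (intro frac_le) auto
  also have "\<dots> = 1 / ((real k + 1) * sqrt (real k + 1))" by simp
  also have "\<dots> = real (Suc k) powr (-3/2)"
  proof -
    have e: "real k + 1 = real (Suc k)" by simp
    show ?thesis unfolding e by (rule powr_32[symmetric]) simp
  qed
  finally show ?thesis .
qed

lemma summable_M: "summable (\<lambda>k. real (Suc k) powr (-3/2))"
  using summable_real_powr_iff[of "-3/2"] summable_Suc_iff[of "\<lambda>n. real n powr (-3/2)"] by simp

definition asf :: "nat \<Rightarrow> real \<Rightarrow> real" where
  "asf k x = ac k * x^(2*k+1) / real (2*k+1)"

lemma asf_bound: "\<bar>x\<bar> \<le> 1 \<Longrightarrow> norm (asf k x) \<le> real (Suc k) powr (-3/2)"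
proof -
  assume x: "\<bar>x\<bar> \<le> 1"
  have "norm (asf k x) = ac k * \<bar>x\<bar>^(2*k+1) / real (2*k+1)"
    by (simp add: asf_def abs_mult power_abs ac_nonneg)
  also have "\<dots> \<le> ac k * 1 / real (2*k+1)"
    by (intro divide_right_mono mult_left_mono power_le_one) (auto simp: ac_nonneg x simp del: power_Suc)
  also have "\<dots> = ac k / (2*real k+1)" by simp
  also have "\<dots> \<le> real (Suc k) powr (-3/2)" by (rule ac_bound)
  finally show ?thesis .
qed

lemma asf_summable: "\<bar>x\<bar> \<le> 1 \<Longrightarrow> summable (\<lambda>k. asf k x)"
  by (rule summable_comparison_test'[OF summable_M, of 0]) (use asf_bound in auto)

lemma powr_mhalf: "(0::real) < y \<Longrightarrow> y powr (-1/2) = inverse (sqrt y)"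
proof -
  assume y: "0 < y"
  have d: "(-1/2::real) = -(1/2)" by simp
  have "y powr (-(1/2)) = inverse (y powr (1/2))" by (rule powr_minus)
  also have "y powr (1/2) = sqrt y" using y by (simp add: powr_half_sqrt)
  finally show ?thesis unfolding d .
qed

lemma sign_aux: "g = (-1)^n * h \<Longrightarrow> h * (-(x^2))^n = g * x^(2*n)" for x g h :: real
proof -
  assume g: "g = (-1)^n * h"
  have "(-(x^2))^n = (-1)^n * (x^2)^n" by (rule power_minus)
  also have "(x^2)^n = x^(2*n)" by (rule power_mult[symmetric])
  finally show ?thesis unfolding g by (simp only: mult_ac)
qed

lemma deriv_series: "\<bar>x\<bar> < 1 \<Longrightarrow> (\<lambda>k. ac k * x^(2*k)) sums inverse (sqrt (1 - x^2))"
proof -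
  assume x: "\<bar>x\<bar> < 1"
  have z: "\<bar>-(x^2)\<bar> < 1" using x by (simp add: abs_square_less_1)
  from gen_binomial_real[OF z, of "-1/2"]
  have "(\<lambda>n. ((-1/2) gchoose n) * (-(x^2))^n) sums (1 + -(x^2)) powr (-1/2)" .
  moreover have "(\<lambda>n. ((-1/2) gchoose n) * (-(x^2))^n) = (\<lambda>k. ac k * x^(2*k))"
    by (rule ext, rule sign_aux, rule ac_gchoose)
  moreover have "(1 + -(x^2)) powr (-1/2) = inverse (sqrt (1 - x^2))"
  proof -
    have "0 < 1 + -(x^2)" using z by simp
    then show ?thesis by (simp only: powr_mhalf) simp
  qed
  ultimately show ?thesis by simp
qed

lemma asf_deriv_inner: 
  assumes x: "\<bar>x\<bar> < 1"
  shows "((\<lambda>x. \<Sum>n. asf n x) has_field_derivative inverse (sqrt (1 - x^2))) (at x)"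
proof -
  define r where "r = (\<bar>x\<bar> + 1) / 2"
  have r: "\<bar>x\<bar> < r" "r < 1" "0 < r" using x by (auto simp: r_def)
  have d: "(asf n has_field_derivative ac n * y^(2*n)) (at y within {-r..r})" for n y
  proof -
    have "((\<lambda>y. y^(2*n+1)) has_field_derivative real (2*n+1) * y^(2*n)) (at y within {-r..r})"
      using DERIV_pow[of "2*n+1" y "{-r..r}"] by simp
    then have "((\<lambda>y. ac n * y^(2*n+1) / real (2*n+1)) has_field_derivative ac n * (real (2*n+1) * y^(2*n)) / real (2*n+1)) (at y within {-r..r})"
      by (intro DERIV_cdivide DERIV_cmult)
    then show ?thesis unfolding asf_def by simp
  qed
  have uc: "uniformly_convergent_on {-r..r} (\<lambda>n y. \<Sum>i<n. ac i * y^(2*i))"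
  proof (rule Weierstrass_m_test'[where M = "\<lambda>n. ac n * r^(2*n)"])
    show "norm (ac n * y^(2*n)) \<le> ac n * r^(2*n)" if "y \<in> {-r..r}" for n y
      using that by (auto simp: abs_mult power_abs ac_nonneg intro!: mult_left_mono power_mono)
    show "summable (\<lambda>n. ac n * r^(2*n))" using deriv_series[of r] r by (auto simp: sums_iff)
  qed
  have s0: "summable (\<lambda>n. asf n 0)" by (simp add: asf_def)
  have xi: "x \<in> interior {-r..r}" using r by auto
  from has_field_derivative_series'(2)[OF convex_real_interval(5) d uc _ s0 xi] r
  have "((\<lambda>x. \<Sum>n. asf n x) has_field_derivative (\<Sum>n. ac n * x^(2*n))) (at x)" by auto
  then show ?thesis using deriv_series[OF x] by (simp add: sums_iff)
qed

lemma arcsin_series_open: "\<bar>x\<bar> < 1 \<Longrightarrow> (\<Sum>n. asf n x) = arcsin x"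
proof -
  let ?G = "\<lambda>x. (\<Sum>n. asf n x) - arcsin x"
  have "(?G has_field_derivative 0) (at y within {-1<..<1})" if "y \<in> {-1<..<1}" for y
  proof -
    have "(?G has_field_derivative inverse (sqrt (1 - y^2)) - inverse (sqrt (1 - y^2))) (at y)"
      using that by (intro DERIV_diff asf_deriv_inner DERIV_arcsin) auto
    then show ?thesis by (simp add: has_field_derivative_at_within)
  qed
  from has_field_derivative_zero_constant[OF convex_real_interval(8) this]
  obtain c where c: "\<forall>y\<in>{-1<..<1}. ?G y = c" by blast
  have "?G 0 = 0" by (simp add: asf_def)
  assume "\<bar>x\<bar> < 1"
  then have "x \<in> {-1<..<1}" by auto
  then have "?G x = c" using c by blast
  moreover have "?G 0 = c" using c[rule_format, of 0] by simp
  ultimately show ?thesis using \<open>?G 0 = 0\<close> by simp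
qed

lemma arcsin_series: assumes "\<bar>x\<bar> \<le> 1" shows "(\<Sum>n. asf n x) = arcsin x"
proof -
  have ul: "uniform_limit {-1..1} (\<lambda>n x. \<Sum>i<n. asf i x) (\<lambda>x. \<Sum>i. asf i x) sequentially"
    by (rule Weierstrass_m_test[OF _ summable_M], rule asf_bound) auto
  have "continuous_on {-1..1} (\<lambda>x. \<Sum>i. asf i x)"
    by (rule uniform_limit_theorem[OF always_eventually ul]) (auto simp: asf_def intro!: continuous_intros)
  then have cont: "continuous_on {-1..1} (\<lambda>x. (\<Sum>i. asf i x) - arcsin x)"
    by (intro continuous_intros continuous_on_arcsin') 
  have cl: "closed {x\<in>{-1..1}. (\<Sum>i. asf i x) - arcsin x = 0}"
    by (rule continuous_closed_preimage_constant[OF cont]) simp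
  have "{-1<..<1} \<subseteq> {x\<in>{-1..1}. (\<Sum>i. asf i x) - arcsin x = 0}"
    using arcsin_series_open by auto
  then have "closure {-1<..<(1::real)} \<subseteq> {x\<in>{-1..1}. (\<Sum>i. asf i x) - arcsin x = 0}"
    using cl closure_minimal by blast
  moreover have "x \<in> closure {-1<..<(1::real)}" using assms by auto
  ultimately have "x \<in> {x\<in>{-1..1}. (\<Sum>i. asf i x) - arcsin x = 0}" by (rule subsetD)
  then show ?thesis by simp
qed
lemma upairs_perm: assumes "\<sigma> permutes {1..n}" "p \<in> upairs n" shows "\<sigma> ` p \<in> upairs n"
proof -
  from assms(2) obtain i j where ij: "i \<in> {1..n}" "j \<in> {1..n}" "i \<noteq> j" "p = {i,j}"
    unfolding upairs_def by blast
  have "\<sigma> i \<in> {1..n}" "\<sigma> j \<in> {1..n}" using ij permutes_in_image[OF assms(1)] by auto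
  moreover have "\<sigma> i \<noteq> \<sigma> j" using ij permutes_inj[OF assms(1)] by (auto dest: injD)
  ultimately show ?thesis unfolding upairs_def using ij by auto
qed

lemma inj_img: assumes "inj \<sigma>" shows "inj ((`) \<sigma>)"
  by (rule injI) (use inj_image_eq_iff[OF assms] in blast)

lemma upairs_bij: assumes "\<sigma> permutes {1..n}" shows "bij_betw ((`) \<sigma>) (upairs n) (upairs n)"
proof (rule bij_betw_imageI)
  show "inj_on ((`) \<sigma>) (upairs n)" by (rule inj_on_subset[OF inj_img[OF permutes_inj[OF assms]]]) simp
  have inv: "inv \<sigma> permutes {1..n}" by (rule permutes_inv[OF assms])
  show "(`) \<sigma> ` upairs n = upairs n"
  proof
    show "(`) \<sigma> ` upairs n \<subseteq> upairs n" using upairs_perm[OF assms] by auto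
    show "upairs n \<subseteq> (`) \<sigma> ` upairs n"
    proof
      fix q assume q: "q \<in> upairs n"
      have "q = \<sigma> ` (inv \<sigma> ` q)" by (simp add: image_image permutes_inverses[OF assms])
      then show "q \<in> (`) \<sigma> ` upairs n" using upairs_perm[OF inv q] by blast
    qed
  qed
qed

definition pimg :: "(nat \<Rightarrow> nat) \<Rightarrow> nat set set \<Rightarrow> nat set set" where
  "pimg \<sigma> B = (`) \<sigma> ` B"

lemma clustering_perm: assumes "\<sigma> permutes {1..n}" "clustering n B" shows "clustering n (pimg \<sigma> B)"
proof -
  have pB: "partition_on {1..n} B" using assms(2) by (simp add: clustering_def)
  have "partition_on (\<sigma> ` {1..n}) ((`) \<sigma> ` B - {{}})"
    by (rule partition_on_inj_image[OF pB]) (rule inj_on_subset[OF permutes_inj[OF assms(1)]], simp)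
  moreover have "\<sigma> ` {1..n} = {1..n}" by (rule permutes_image[OF assms(1)])
  moreover have "{} \<notin> (`) \<sigma> ` B" using pB by (auto simp: partition_on_def)
  ultimately show ?thesis by (simp add: clustering_def pimg_def)
qed

lemma sizes_perm: assumes "\<sigma> permutes {1..n}" 
  shows "image_mset card (mset_set (pimg \<sigma> B)) = image_mset card (mset_set B)"
proof -
  have inj: "inj \<sigma>" by (rule permutes_inj[OF assms])
  have "mset_set (pimg \<sigma> B) = image_mset ((`) \<sigma>) (mset_set B)"
    unfolding pimg_def by (rule image_mset_mset_set[symmetric]) (rule inj_on_subset[OF inj_img[OF inj]], simp)
  then have "image_mset card (mset_set (pimg \<sigma> B)) = image_mset (\<lambda>C. card (\<sigma> ` C)) (mset_set B)"
    by (simp add: multiset.map_comp o_def)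
  also have "\<dots> = image_mset card (mset_set B)"
    by (rule image_mset_cong, rule card_image, rule inj_on_subset[OF inj], simp)
  finally show ?thesis .
qed

lemma S_perm: assumes "\<sigma> permutes {1..n}" "B \<in> clusterings_sizes n s"
  shows "pimg \<sigma> B \<in> clusterings_sizes n s"
  using assms clustering_perm sizes_perm by (auto simp: clusterings_sizes_def)

lemma S_bij: assumes "\<sigma> permutes {1..n}"
  shows "bij_betw (pimg \<sigma>) (clusterings_sizes n s) (clusterings_sizes n s)"
proof (rule bij_betw_imageI)
  have inj: "inj \<sigma>" by (rule permutes_inj[OF assms])
  show "inj_on (pimg \<sigma>) (clusterings_sizes n s)"
    unfolding pimg_def by (rule inj_on_subset[OF inj_img[OF inj_img[OF inj]]]) simp
  have inv: "inv \<sigma> permutes {1..n}" by (rule permutes_inv[OF assms])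
  show "pimg \<sigma> ` clusterings_sizes n s = clusterings_sizes n s"
  proof
    show "pimg \<sigma> ` clusterings_sizes n s \<subseteq> clusterings_sizes n s" using S_perm[OF assms] by auto
    show "clusterings_sizes n s \<subseteq> pimg \<sigma> ` clusterings_sizes n s"
    proof
      fix B assume B: "B \<in> clusterings_sizes n s"
      have "B = pimg \<sigma> (pimg (inv \<sigma>) B)"
        by (simp add: pimg_def image_image permutes_inverses[OF assms])
      then show "B \<in> pimg \<sigma> ` clusterings_sizes n s" using S_perm[OF inv B] by blast
    qed
  qed
qed

lemma cvec_perm: assumes "\<sigma> permutes {1..n}" shows "cvec (pimg \<sigma> B) (\<sigma> ` p) = cvec B p"
proof -
  have inj: "inj \<sigma>" by (rule permutes_inj[OF assms])
  have "(\<exists>C\<in>pimg \<sigma> B. \<sigma> ` p \<subseteq> C) \<longleftrightarrow> (\<exists>C\<in>B. p \<subseteq> C)"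
    unfolding pimg_def using inj_image_subset_iff[OF inj] by auto
  then show ?thesis by (simp add: cvec_def)
qed

lemma sum_upairs_perm: assumes "\<sigma> permutes {1..n}"
  shows "(\<Sum>p\<in>upairs n. g (\<sigma> ` p)) = (\<Sum>p\<in>upairs n. g p)"
  using sum.reindex_bij_betw[OF upairs_bij[OF assms]] .

lemma mA_perm: assumes "\<sigma> permutes {1..n}" shows "mA n (pimg \<sigma> B) = mA n B"
proof -
  have "mA n (pimg \<sigma> B) = (\<Sum>p\<in>upairs n. cvec (pimg \<sigma> B) (\<sigma> ` p))"
    unfolding mA_def by (rule sum_upairs_perm[OF assms, symmetric])
  also have "\<dots> = mA n B" unfolding mA_def cvec_perm[OF assms] ..
  finally show ?thesis .
qed

lemma card_pimg: assumes "\<sigma> permutes {1..n}" shows "card (pimg \<sigma> B) = card B"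
  unfolding pimg_def
  by (rule card_image) (rule inj_on_subset[OF inj_img[OF permutes_inj[OF assms]]], simp)

lemma uvec_perm: assumes "\<sigma> permutes {1..n}" shows "uvec n (pimg \<sigma> B) (\<sigma> ` p) = uvec n B p"
proof -
  have "(\<Sum>q\<in>upairs n. (cvec (pimg \<sigma> B) q - mA n (pimg \<sigma> B) / NN n)^2)
      = (\<Sum>q\<in>upairs n. (cvec (pimg \<sigma> B) (\<sigma> ` q) - mA n (pimg \<sigma> B) / NN n)^2)"
    by (rule sum_upairs_perm[OF assms, symmetric])
  also have "\<dots> = (\<Sum>q\<in>upairs n. (cvec B q - mA n B / NN n)^2)"
    unfolding cvec_perm[OF assms] mA_perm[OF assms] ..
  finally show ?thesis
    unfolding uvec_def card_pimg[OF assms] cvec_perm[OF assms] mA_perm[OF assms] by simp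
qed

lemma f_perm: assumes "\<sigma> permutes {1..n}"
  shows "(\<Sum>B\<in>clusterings_sizes n s. uvec n B (\<sigma> ` p)) = (\<Sum>B\<in>clusterings_sizes n s. uvec n B p)"
proof -
  have "(\<Sum>B\<in>clusterings_sizes n s. uvec n B (\<sigma> ` p))
      = (\<Sum>B\<in>clusterings_sizes n s. uvec n (pimg \<sigma> B) (\<sigma> ` p))"
    by (rule sum.reindex_bij_betw[OF S_bij[OF assms], symmetric])
  also have "\<dots> = (\<Sum>B\<in>clusterings_sizes n s. uvec n B p)" unfolding uvec_perm[OF assms] ..
  finally show ?thesis .
qed

lemma f_const: assumes "p \<in> upairs n" "q \<in> upairs n"
  shows "(\<Sum>B\<in>clusterings_sizes n s. uvec n B p) = (\<Sum>B\<in>clusterings_sizes n s. uvec n B q)"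
proof -
  from assms(1) obtain i j where ij: "i \<in> {1..n}" "j \<in> {1..n}" "i \<noteq> j" "p = {i,j}"
    unfolding upairs_def by blast
  from assms(2) obtain k l where kl: "k \<in> {1..n}" "l \<in> {1..n}" "k \<noteq> l" "q = {k,l}"
    unfolding upairs_def by blast
  define \<sigma>1 where "\<sigma>1 = Transposition.transpose i k"
  have s1: "\<sigma>1 permutes {1..n}" unfolding \<sigma>1_def using ij kl by (intro permutes_swap_id) auto
  define j' where "j' = \<sigma>1 j"
  have j': "j' \<in> {1..n}" "j' \<noteq> k" unfolding j'_def \<sigma>1_def using ij kl by (auto simp: Transposition.transpose_def)
  have p1: "\<sigma>1 ` p = {k, j'}" unfolding j'_def \<sigma>1_def ij(4) by simp
  define \<sigma>2 where "\<sigma>2 = Transposition.transpose j' l"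
  have s2: "\<sigma>2 permutes {1..n}" unfolding \<sigma>2_def using j' kl by (intro permutes_swap_id) auto
  have p2: "\<sigma>2 ` {k, j'} = q" unfolding \<sigma>2_def kl(4) using j' kl by (auto simp: Transposition.transpose_def)
  have "(\<Sum>B\<in>clusterings_sizes n s. uvec n B q) = (\<Sum>B\<in>clusterings_sizes n s. uvec n B (\<sigma>2 ` (\<sigma>1 ` p)))"
    unfolding p1 p2 ..
  also have "\<dots> = (\<Sum>B\<in>clusterings_sizes n s. uvec n B (\<sigma>1 ` p))" by (rule f_perm[OF s2])
  also have "\<dots> = (\<Sum>B\<in>clusterings_sizes n s. uvec n B p)" by (rule f_perm[OF s1])
  finally show ?thesis ..
qed

lemma exists_clustering:
  "(\<forall>x\<in>#s. 0 < x) \<Longrightarrow> \<exists>B. clustering (sum_mset s) B \<and> image_mset card (mset_set B) = s"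
proof (induction s)
  case empty
  show ?case by (rule exI[of _ "{}"]) (simp add: clustering_def partition_on_empty)
next
  case (add x s)
  then obtain B where B: "clustering (sum_mset s) B" "image_mset card (mset_set B) = s" by auto
  define m where "m = sum_mset s"
  define C where "C = {m+1..m+x}"
  have x: "0 < x" using add.prems by simp
  have pB: "partition_on {1..m} B" using B(1) by (simp add: clustering_def m_def)
  have U: "\<Union>B = {1..m}" using pB by (simp add: partition_on_def)
  have dj: "disjnt C (\<Union>B)" unfolding U C_def by (auto simp: disjnt_def)
  have Cne: "C \<noteq> {}" using x by (simp add: C_def)
  have e: "{1..m+x} - C = {1..m}" by (auto simp: C_def)
  have "partition_on {1..m+x} (insert C B)"
    using partition_on_insert[OF dj, of "{1..m+x}"] pB Cne e by (auto simp: C_def)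
  then have cl: "clustering (sum_mset (add_mset x s)) (insert C B)"
    by (simp add: clustering_def m_def add.commute)
  have fin: "finite B" using finite_elements[OF _ pB] by simp
  have CnB: "C \<notin> B"
  proof
    assume "C \<in> B"
    then have "C \<subseteq> \<Union>B" by auto
    with dj Cne show False by (auto simp: disjnt_def)
  qed
  have cC: "card C = x" by (simp add: C_def)
  have "image_mset card (mset_set (insert C B)) = add_mset x s"
    using fin CnB cC B(2) by simp
  with cl show ?case by blast
qed

lemma S_finite: "finite (clusterings_sizes n s)"
proof (rule finite_subset)
  show "clusterings_sizes n s \<subseteq> {P. partition_on {1..n} P}"
    by (auto simp: clusterings_sizes_def clustering_def)
  show "finite {P. partition_on {1..n} P}" by (rule finitely_many_partition_on) simp
qed

lemma S_nonempty: "(\<forall>x\<in>#s. 0 < x) \<Longrightarrow> sum_mset s = n \<Longrightarrow> clusterings_sizes n s \<noteq> {}"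
  using exists_clustering[of s] by (auto simp: clusterings_sizes_def)

lemma NN_const_sq: "(\<Sum>p\<in>upairs n. (c / sqrt (NN n))^2) \<le> 1" if "c^2 = 1" for c :: real
proof (cases "NN n = 0")
  case True then show ?thesis by simp
next
  case False
  have pos: "NN n > 0" using False by (simp add: NN_def)
  have "(\<Sum>p\<in>upairs n. (c / sqrt (NN n))^2) = NN n * (1 / NN n)"
    using pos that by (simp add: NN_def power_divide)
  also have "\<dots> = 1" using pos by simp
  finally show ?thesis by simp
qed

lemma uvec_sq: "(\<Sum>p\<in>upairs n. (uvec n B p)^2) \<le> 1"
proof -
  consider "card B = 1" | "card B \<noteq> 1" "card B = n" | "card B \<noteq> 1" "card B \<noteq> n" by blast
  then show ?thesis
  proof cases
    case 1
    then show ?thesis unfolding uvec_def using NN_const_sq[of 1] by simp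
  next
    case 2
    then show ?thesis unfolding uvec_def using NN_const_sq[of "-1"] by simp
  next
    case 3
    define S where "S = (\<Sum>q\<in>upairs n. (cvec B q - mA n B / NN n)^2)"
    have S0: "S \<ge> 0" unfolding S_def by (intro sum_nonneg) simp
    have "(\<Sum>p\<in>upairs n. (uvec n B p)^2) = (\<Sum>p\<in>upairs n. (cvec B p - mA n B / NN n)^2 / S)"
      unfolding uvec_def using 3 S0 by (simp add: S_def[symmetric] power_divide)
    also have "\<dots> = S / S" unfolding sum_divide_distrib[symmetric] S_def ..
    also have "\<dots> \<le> 1" by simp
    finally show ?thesis .
  qed
qed

lemma CC_bound: "\<bar>CC n A B\<bar> \<le> 1"
proof -
  have "(CC n A B)^2 \<le> (\<Sum>p\<in>upairs n. (uvec n A p)^2) * (\<Sum>p\<in>upairs n. (uvec n B p)^2)"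
    unfolding CC_def by (rule Cauchy_Schwarz_ineq_sum)
  also have "\<dots> \<le> 1 * 1"
    by (intro mult_mono uvec_sq) (auto intro: sum_nonneg)
  finally show ?thesis by (simp add: abs_square_le_1)
qed

lemma uvec_sum_zero:
  assumes "card A \<noteq> 1" "card A \<noteq> n" "NN n > 0"
  shows "(\<Sum>p\<in>upairs n. uvec n A p) = 0"
proof -
  define D where "D = sqrt (\<Sum>q\<in>upairs n. (cvec A q - mA n A / NN n)^2)"
  have "(\<Sum>p\<in>upairs n. uvec n A p) = (\<Sum>p\<in>upairs n. (cvec A p - mA n A / NN n)) / D"
    unfolding uvec_def D_def using assms by (simp add: sum_divide_distrib)
  also have "(\<Sum>p\<in>upairs n. (cvec A p - mA n A / NN n)) = mA n A - NN n * (mA n A / NN n)"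
    by (simp add: sum_subtractf mA_def NN_def)
  also have "\<dots> = 0" using assms(3) by simp
  finally show ?thesis by simp
qed

lemma ECC_zero:
  assumes "card A \<noteq> 1" "card A \<noteq> n" "n \<ge> 2"
  shows "(\<Sum>B\<in>clusterings_sizes n s. CC n A B) = 0"
proof -
  have p0: "{1,2} \<in> upairs n" using assms(3) unfolding upairs_def by force
  have fin: "finite (upairs n)"
    by (rule finite_subset[of _ "Pow {1..n}"]) (auto simp: upairs_def)
  have "card (upairs n) > 0" using p0 fin card_gt_0_iff by blast
  then have NN: "NN n > 0" by (simp add: NN_def)
  define K where "K = (\<Sum>B\<in>clusterings_sizes n s. uvec n B {1,2})"
  have "(\<Sum>B\<in>clusterings_sizes n s. CC n A B)
      = (\<Sum>p\<in>upairs n. uvec n A p * (\<Sum>B\<in>clusterings_sizes n s. uvec n B p))"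
    unfolding CC_def by (simp add: sum_distrib_left sum.swap[of _ "clusterings_sizes n s"])
  also have "\<dots> = (\<Sum>p\<in>upairs n. uvec n A p * K)"
    unfolding K_def by (rule sum.cong[OF refl]) (simp add: f_const[OF _ p0])
  also have "\<dots> = (\<Sum>p\<in>upairs n. uvec n A p) * K" by (simp add: sum_distrib_right)
  also have "\<dots> = 0" using uvec_sum_zero[OF assms(1,2) NN] by simp
  finally show ?thesis .
qed

theorem mainTheorem7:
  fixes n :: nat and A :: "nat set set" and s :: "nat multiset"
  assumes "clustering n A" and "1 < card A" and "card A < n"
    and "\<forall>x\<in>#s. 0 < x" and "sum_mset s = n"
  defines "c \<equiv> (\<lambda>k::nat. fact (2*k) / (2^(2*k) * (fact k)^2) *
             measure_pmf.expectation (Cdist n s) (\<lambda>B. CC n A B ^ (2*k+1)) / real (2*k+1) :: real)"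
  shows "summable (\<lambda>k. c (Suc k)) \<and>
    measure_pmf.expectation (Cdist n s) (\<lambda>B. CD n A B) - 1/2 = - (1/pi) * (\<Sum>k. c (Suc k))"
proof -
  let ?S = "clusterings_sizes n s"
  let ?C = "real (card ?S)"
  have fin: "finite ?S" by (rule S_finite)
  have ne: "?S \<noteq> {}" using S_nonempty assms(4,5) by auto
  have E: "measure_pmf.expectation (Cdist n s) f = sum f ?S / ?C" for f
    unfolding Cdist_def by (rule integral_pmf_of_set[OF ne fin])
  have cpos: "?C > 0" using fin ne by (simp add: card_gt_0_iff)
  have ck: "c k = (\<Sum>B\<in>?S. asf k (CC n A B)) / ?C" for k
  proof -
    have d: "real (2*k+1) > 0" by simp
    have "c k = ac k * ((\<Sum>B\<in>?S. CC n A B ^ (2*k+1)) / ?C) / real (2*k+1)"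
      unfolding c_def E ac_def ..
    also have "\<dots> = (ac k * (\<Sum>B\<in>?S. CC n A B ^ (2*k+1)) / real (2*k+1)) / ?C"
      using cpos d by (simp add: field_simps)
    also have "ac k * (\<Sum>B\<in>?S. CC n A B ^ (2*k+1)) / real (2*k+1) = (\<Sum>B\<in>?S. asf k (CC n A B))"
      unfolding asf_def by (simp add: sum_distrib_left sum_divide_distrib)
    finally show ?thesis .
  qed
  have sums1: "(\<lambda>k. \<Sum>B\<in>?S. asf k (CC n A B)) sums (\<Sum>B\<in>?S. arcsin (CC n A B))"
  proof (rule sums_sum)
    fix B
    have "(\<lambda>k. asf k (CC n A B)) sums (\<Sum>k. asf k (CC n A B))"
      by (rule summable_sums[OF asf_summable[OF CC_bound]])
    then show "(\<lambda>k. asf k (CC n A B)) sums arcsin (CC n A B)"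
      using arcsin_series[OF CC_bound] by simp
  qed
  have sums2: "c sums ((\<Sum>B\<in>?S. arcsin (CC n A B)) / ?C)"
    unfolding ck by (rule sums_divide[OF sums1])
  have "c 0 = (\<Sum>B\<in>?S. CC n A B) / ?C" unfolding ck by (simp add: asf_def ac_def)
  also have "(\<Sum>B\<in>?S. CC n A B) = 0"
    by (rule ECC_zero) (use assms(2,3) in auto)
  finally have c0: "c 0 = 0" by simp
  have sums3: "(\<lambda>k. c (Suc k)) sums ((\<Sum>B\<in>?S. arcsin (CC n A B)) / ?C)"
    using sums2 c0 sums_Suc_iff[of c] by simp
  define T where "T = (\<Sum>B\<in>?S. arcsin (CC n A B))"
  have "(\<Sum>B\<in>?S. CD n A B) = (\<Sum>B\<in>?S. 1/2 - arcsin (CC n A B) / pi)"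
  proof (rule sum.cong[OF refl])
    fix B
    have "-1 \<le> CC n A B" "CC n A B \<le> 1" using CC_bound[of n A B] by auto
    then show "CD n A B = 1/2 - arcsin (CC n A B) / pi"
      unfolding CD_def by (simp add: arccos_arcsin_eq diff_divide_distrib)
  qed
  also have "\<dots> = ?C / 2 - T / pi"
    by (simp add: sum_subtractf sum_divide_distrib[symmetric] T_def)
  finally have CDs: "(\<Sum>B\<in>?S. CD n A B) = ?C / 2 - T / pi" .
  have "measure_pmf.expectation (Cdist n s) (\<lambda>B. CD n A B) - 1/2 = - (1/pi) * (T / ?C)"
    unfolding E CDs using cpos pi_gt_zero by (simp add: field_simps)
  moreover have "(\<Sum>k. c (Suc k)) = T / ?C" using sums3 unfolding T_def by (simp add: sums_iff)
  ultimately show ?thesis using sums3 by (auto simp: sums_iff)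
qed

end
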